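(* For $n\ge 1$ let $p_n=\Psi(P_n)$, $m_n=\Psi(M_n)$, $o_n=\Psi(O_n)$, and set $p_0=m_0=o_0=1$. Let $P(x)=\sum_{n\ge0}p_nx^n$, $M(x)=\sum_{n\ge0}m_nx^n$, $O(x)=\sum_{n\ge0}o_nx^n$ be the ordinary generating functions. Then $$P(x)=\frac{1+4x^2}{1-5x+4x^2-4x^3},\qquad M(x)=\frac{1-x-2x^2}{1-6x+3x^2-2x^3},\qquad O(x)=\frac{1+x+x^2}{1-4x-4x^2-x^3}.$$
   Context: All graphs are finite and simple. A matching of a graph $G$ is a set of edges no two of which share a vertex; it is maximal if it is not a proper subset of another matching of $G$. $\Psi(G)$ denotes the number of maximal matchings of $G$ (the empty graph has exactly one, the empty matching). A hexagonal cactus is a connected graph in which every block is a 6-cycle (hexagon). A chain hexagonal cactus is a hexagonal cactus in which each hexagon contains at most two cut-vertices and each cut-vertex is shared by exactly two hexagons; its length is the number of hexagons. In a chain of length $\ge 2$, exactly two hexagons contain one cut-vertex (terminal hexagons); the others contain two (internal hexagons). An internal hexagon is an ortho-, meta- or para-hexagon according as its two cut-vertices are at distance 1, 2 or 3 in the hexagon. $P_n$, $M_n$, $O_n$ denote the (unique up to isomorphism) chain hexagonal cacti of length $n$ all of whose internal hexagons are para-, meta-, resp. ortho-hexagons (for $n\le 2$ these coincide). *)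

theory Defs
  imports "HOL-Computational_Algebra.Formal_Power_Series"
begin

(* A simple graph is given by its edge set: a set of 2-element vertex sets. *)

definition matching :: "'a set set \<Rightarrow> 'a set set \<Rightarrow> bool" where
  "matching E M \<longleftrightarrow> M \<subseteq> E \<and> (\<forall>e\<in>M. \<forall>f\<in>M. e \<noteq> f \<longrightarrow> e \<inter> f = {})"

definition maximal_matching :: "'a set set \<Rightarrow> 'a set set \<Rightarrow> bool" where
  "maximal_matching E M \<longleftrightarrow>
     matching E M \<and> (\<forall>M'. matching E M' \<and> M \<subseteq> M' \<longrightarrow> M' = M)"

definition Psi :: "'a set set \<Rightarrow> nat" where
  "Psi E = card {M. maximal_matching E M}"

(* Chain hexagonal cactus of length n in which every internal hexagon has
   its two cut-vertices at distance d (d = 1 ortho, 2 meta, 3 para).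
   Hexagon k (k < n) is the 6-cycle
     hex_entry d k, 5k+1, 5k+2, 5k+3, 5k+4, 5k+5, hex_entry d k,
   and hexagon k+1 is attached at vertex 5k+d of hexagon k, which is at
   distance d from hex_entry d k along the cycle. *)
definition hex_entry :: "nat \<Rightarrow> nat \<Rightarrow> nat" where
  "hex_entry d k = (if k = 0 then 0 else 5 * (k - 1) + d)"

definition hex_edges :: "nat \<Rightarrow> nat \<Rightarrow> nat set set" where
  "hex_edges d k =
     {{hex_entry d k, 5*k+1}, {5*k+1, 5*k+2}, {5*k+2, 5*k+3},
      {5*k+3, 5*k+4}, {5*k+4, 5*k+5}, {5*k+5, hex_entry d k}}"

definition chain_edges :: "nat \<Rightarrow> nat \<Rightarrow> nat set set" where
  "chain_edges d n = (\<Union>k<n. hex_edges d k)"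

abbreviation para_chain :: "nat \<Rightarrow> nat set set" where "para_chain n \<equiv> chain_edges 3 n"
abbreviation meta_chain :: "nat \<Rightarrow> nat set set" where "meta_chain n \<equiv> chain_edges 2 n"
abbreviation ortho_chain :: "nat \<Rightarrow> nat set set" where "ortho_chain n \<equiv> chain_edges 1 n"

definition psi_seq :: "nat \<Rightarrow> nat \<Rightarrow> nat" where
  "psi_seq d n = (if n = 0 then 1 else Psi (chain_edges d n))"

end

theory Submission
  imports Defs
begin
definition good :: "'a set set \<Rightarrow> 'a set \<Rightarrow> 'a set \<Rightarrow> 'a set set \<Rightarrow> bool" where
 "good E U D M \<longleftrightarrow> M \<subseteq> E \<and> (\<forall>e\<in>M. \<forall>f\<in>M. e \<noteq> f \<longrightarrow> e \<inter> f = {}) \<and> (\<forall>e\<in>M. e \<inter> U = {})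
   \<and> (\<forall>e\<in>E. e \<inter> D = {} \<longrightarrow> (\<exists>f\<in>M. e \<inter> f \<noteq> {}))"

lemma good_sub: "good E U D M \<Longrightarrow> M \<subseteq> E" by (simp add: good_def)
lemma good_pw: "good E U D M \<Longrightarrow> e \<in> M \<Longrightarrow> f \<in> M \<Longrightarrow> e \<noteq> f \<Longrightarrow> e \<inter> f = {}"
  by (simp add: good_def)
lemma good_U: "good E U D M \<Longrightarrow> e \<in> M \<Longrightarrow> e \<inter> U = {}" by (simp add: good_def)
lemma good_dom: "good E U D M \<Longrightarrow> e \<in> E \<Longrightarrow> e \<inter> D = {} \<Longrightarrow> \<exists>f\<in>M. e \<inter> f \<noteq> {}"
  by (simp add: good_def)
lemma goodI: "M \<subseteq> E \<Longrightarrow> (\<And>e f. e \<in> M \<Longrightarrow> f \<in> M \<Longrightarrow> e \<noteq> f \<Longrightarrow> e \<inter> f = {}) \<Longrightarrow>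
  (\<And>e. e \<in> M \<Longrightarrow> e \<inter> U = {}) \<Longrightarrow> (\<And>e. e \<in> E \<Longrightarrow> e \<inter> D = {} \<Longrightarrow> \<exists>f\<in>M. e \<inter> f \<noteq> {})
  \<Longrightarrow> good E U D M"
  by (simp add: good_def)
lemma good_U_mem: "good E U D M \<Longrightarrow> e \<in> M \<Longrightarrow> x \<in> U \<Longrightarrow> x \<notin> e"
  using good_U by blast

lemma good_union_fwd:
  assumes AB: "A \<subseteq> G" "B \<subseteq> H" and disj: "G \<inter> H = {}" and V: "\<Union>G \<inter> \<Union>H \<subseteq> {c}"
    and UD: "(U \<union> D) \<inter> \<Union>G = {}"
    and L: "good (G \<union> H) U D (A \<union> B)"
  shows "(good G {} {} A \<and> c \<in> \<Union>A \<and> good H (insert c U) (insert c D) B) \<or>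
     (good G {c} {c} A \<and> good H U D B \<and> c \<in> \<Union>B) \<or>
     (good G {c} {} A \<and> good H (insert c U) D B)"
proof -
  have mA: "e \<inter> f = {}" if "e \<in> A" "f \<in> A" "e \<noteq> f" for e f using good_pw[OF L] that by blast
  have mB: "e \<inter> f = {}" if "e \<in> B" "f \<in> B" "e \<noteq> f" for e f using good_pw[OF L] that by blast
  have mAB: "e \<inter> f = {}" if "e \<in> A" "f \<in> B" for e f
  proof -
    have "e \<noteq> f" using AB disj that by blast
    thus "e \<inter> f = {}" using good_pw[OF L, of e f] that by blast
  qed
  have UB: "e \<inter> U = {}" if "e \<in> B" for e using good_U[OF L, of e] that by blast
  have dom: "\<exists>f\<in>A \<union> B. e \<inter> f \<noteq> {}" if "e \<in> G \<union> H" "e \<inter> D = {}" for e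
    using good_dom[OF L that] .
  have GB: "e \<inter> f \<subseteq> {c}" if "e \<in> G" "f \<in> B" for e f
  proof -
    have "f \<in> H" using AB that by blast
    hence "e \<inter> f \<subseteq> \<Union>G \<inter> \<Union>H" using that by blast
    thus ?thesis using V by blast
  qed
  have HA: "e \<inter> f \<subseteq> {c}" if "e \<in> H" "f \<in> A" for e f
  proof -
    have "f \<in> G" using AB that by blast
    hence "e \<inter> f \<subseteq> \<Union>G \<inter> \<Union>H" using that by blast
    thus ?thesis using V by blast
  qed
  have DG: "e \<inter> D = {}" if "e \<in> G" for e using UD that by blast
  have domA: "\<exists>f\<in>A. e \<inter> f \<noteq> {}"
    if e: "e \<in> G" and alt: "c \<in> e \<Longrightarrow> c \<in> \<Union>B \<Longrightarrow> \<exists>f\<in>A. e \<inter> f \<noteq> {}" for e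
  proof -
    obtain f where f: "f \<in> A \<union> B" "e \<inter> f \<noteq> {}" using dom[of e] DG[OF e] e by blast
    show ?thesis
    proof (cases "f \<in> A")
      case True thus ?thesis using f by blast
    next
      case False hence fB: "f \<in> B" using f by blast
      have "c \<in> e" "c \<in> f" using GB[OF e fB] f(2) by blast+
      thus ?thesis using alt fB by blast
    qed
  qed
  have domB: "\<exists>f\<in>B. e \<inter> f \<noteq> {}"
    if e: "e \<in> H" "e \<inter> D = {}" and alt: "c \<in> e \<Longrightarrow> c \<in> \<Union>A \<Longrightarrow> \<exists>f\<in>B. e \<inter> f \<noteq> {}" for e
  proof -
    obtain f where f: "f \<in> A \<union> B" "e \<inter> f \<noteq> {}" using dom[of e] e by blast
    show ?thesis
    proof (cases "f \<in> B")
      case True thus ?thesis using f by blast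
    next
      case False hence fA: "f \<in> A" using f by blast
      have "c \<in> e" "c \<in> f" using HA[OF e(1) fA] f(2) by blast+
      thus ?thesis using alt fA by blast
    qed
  qed
  show ?thesis
  proof (cases "c \<in> \<Union>A")
    case True
    have cB: "c \<notin> \<Union>B"
    proof
      assume "c \<in> \<Union>B"
      then obtain b where "b \<in> B" "c \<in> b" by blast
      moreover obtain a where "a \<in> A" "c \<in> a" using True by blast
      ultimately show False using mAB by blast
    qed
    have g1: "good G {} {} A"
    proof (rule goodI)
      show "A \<subseteq> G" using AB by simp
    next
      fix e assume "e \<in> G" thus "\<exists>f\<in>A. e \<inter> f \<noteq> {}" using domA cB by blast
    qed (use mA in auto)
    have g2: "good H (insert c U) (insert c D) B"
    proof (rule goodI)
      show "B \<subseteq> H" using AB by simp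
    next
      fix e assume "e \<in> B" thus "e \<inter> insert c U = {}" using UB cB by blast
    next
      fix e assume "e \<in> H" "e \<inter> insert c D = {}" thus "\<exists>f\<in>B. e \<inter> f \<noteq> {}" using domB by blast
    qed (use mB in auto)
    show ?thesis using g1 g2 True by blast
  next
    case False
    note cA = False
    show ?thesis
    proof (cases "c \<in> \<Union>B")
      case True
      have g1: "good G {c} {c} A"
      proof (rule goodI)
        show "A \<subseteq> G" using AB by simp
      next
        fix e assume "e \<in> A" thus "e \<inter> {c} = {}" using cA by blast
      next
        fix e assume "e \<in> G" "e \<inter> {c} = {}" thus "\<exists>f\<in>A. e \<inter> f \<noteq> {}" using domA by blast
      qed (use mA in auto)
      have g2: "good H U D B"
      proof (rule goodI)
        show "B \<subseteq> H" using AB by simp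
      next
        fix e assume "e \<in> H" "e \<inter> D = {}" thus "\<exists>f\<in>B. e \<inter> f \<noteq> {}" using domB cA by blast
      qed (use mB UB in auto)
      show ?thesis using g1 g2 True by blast
    next
      case False
      have g1: "good G {c} {} A"
      proof (rule goodI)
        show "A \<subseteq> G" using AB by simp
      next
        fix e assume "e \<in> A" thus "e \<inter> {c} = {}" using cA by blast
      next
        fix e assume "e \<in> G" thus "\<exists>f\<in>A. e \<inter> f \<noteq> {}" using domA False by blast
      qed (use mA in auto)
      have g2: "good H (insert c U) D B"
      proof (rule goodI)
        show "B \<subseteq> H" using AB by simp
      next
        fix e assume "e \<in> B" thus "e \<inter> insert c U = {}" using UB False by blast
      next
        fix e assume "e \<in> H" "e \<inter> D = {}" thus "\<exists>f\<in>B. e \<inter> f \<noteq> {}" using domB cA by blast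
      qed (use mB in auto)
      show ?thesis using g1 g2 by blast
    qed
  qed
qed

lemma good_union_bwd:
  assumes AB: "A \<subseteq> G" "B \<subseteq> H" and V: "\<Union>G \<inter> \<Union>H \<subseteq> {c}"
    and UD: "(U \<union> D) \<inter> \<Union>G = {}"
    and R: "(good G {} {} A \<and> c \<in> \<Union>A \<and> good H (insert c U) (insert c D) B) \<or>
     (good G {c} {c} A \<and> good H U D B \<and> c \<in> \<Union>B) \<or>
     (good G {c} {} A \<and> good H (insert c U) D B)"
  shows "good (G \<union> H) U D (A \<union> B)"
proof -
  have gA: "good G {} {} A \<or> good G {c} {c} A \<or> good G {c} {} A" using R by blast
  have gB: "good H (insert c U) (insert c D) B \<or> good H U D B \<or> good H (insert c U) D B" using R by blast
  have mA: "e \<inter> f = {}" if "e \<in> A" "f \<in> A" "e \<noteq> f" for e f using gA good_pw that by metis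
  have mB: "e \<inter> f = {}" if "e \<in> B" "f \<in> B" "e \<noteq> f" for e f using gB good_pw that by metis
  have UB: "e \<inter> U = {}" if "e \<in> B" for e
  proof -
    have "e \<inter> insert c U = {} \<or> e \<inter> U = {}" using gB good_U that by metis
    thus ?thesis by blast
  qed
  have UA: "e \<inter> U = {}" if "e \<in> A" for e using AB UD that by blast
  have notboth: "\<not> (c \<in> \<Union>A \<and> c \<in> \<Union>B)"
  proof
    assume h: "c \<in> \<Union>A \<and> c \<in> \<Union>B"
    then obtain a b where ab: "a \<in> A" "c \<in> a" "b \<in> B" "c \<in> b" by blast
    show False using R
    proof (elim disjE conjE)
      assume "good H (insert c U) (insert c D) B" thus False using good_U_mem ab by fastforce
    next
      assume "good G {c} {c} A" thus False using good_U_mem ab by fastforce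
    next
      assume "good G {c} {} A" thus False using good_U_mem ab by fastforce
    qed
  qed
  have mAB: "e \<inter> f = {}" if "e \<in> A" "f \<in> B" for e f
  proof -
    have "e \<inter> f \<subseteq> \<Union>G \<inter> \<Union>H" using that AB by blast
    hence "e \<inter> f \<subseteq> {c}" using V by blast
    moreover have "c \<notin> e \<inter> f" using notboth that by blast
    ultimately show ?thesis by blast
  qed
  show ?thesis
  proof (rule goodI)
    show "A \<union> B \<subseteq> G \<union> H" using AB by blast
  next
    fix e f assume ef: "e \<in> A \<union> B" "f \<in> A \<union> B" "e \<noteq> f"
    show "e \<inter> f = {}"
    proof (cases "e \<in> A")
      case True
      show ?thesis proof (cases "f \<in> A")
        case True thus ?thesis using mA ef \<open>e \<in> A\<close> by blast
      next
        case False thus ?thesis using mAB[of e f] ef \<open>e \<in> A\<close> by blast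
      qed
    next
      case False
      show ?thesis proof (cases "f \<in> A")
        case True thus ?thesis using mAB[of f e] ef \<open>e \<notin> A\<close> by (simp add: Int_commute)
      next
        case False thus ?thesis using mB ef \<open>e \<notin> A\<close> by blast
      qed
    qed
  next
    fix e assume "e \<in> A \<union> B" thus "e \<inter> U = {}" using UA UB by blast
  next
    fix e assume e: "e \<in> G \<union> H" "e \<inter> D = {}"
    show "\<exists>f\<in>A \<union> B. e \<inter> f \<noteq> {}"
    proof (cases "e \<in> G")
      case True
      show ?thesis using R
      proof (elim disjE conjE)
        assume "good G {} {} A" thus ?thesis using True good_dom by fastforce
      next
        assume g: "good G {c} {c} A" "c \<in> \<Union>B"
        show ?thesis
        proof (cases "c \<in> e")
          case True thus ?thesis using g(2) by blast
        next
          case False hence "e \<inter> {c} = {}" by blast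
          thus ?thesis using good_dom[OF g(1) \<open>e \<in> G\<close>] by blast
        qed
      next
        assume "good G {c} {} A" thus ?thesis using True good_dom by fastforce
      qed
    next
      case False hence eH: "e \<in> H" using e by blast
      show ?thesis using R
      proof (elim disjE conjE)
        assume g: "c \<in> \<Union>A" "good H (insert c U) (insert c D) B"
        show ?thesis
        proof (cases "c \<in> e")
          case True thus ?thesis using g(1) by blast
        next
          case False hence "e \<inter> insert c D = {}" using e by blast
          thus ?thesis using good_dom[OF g(2) eH] by blast
        qed
      next
        assume "good H U D B" thus ?thesis using eH e good_dom by fastforce
      next
        assume "good H (insert c U) D B" thus ?thesis using eH e good_dom by fastforce
      qed
    qed
  qed
qed
definition cnt where "cnt E U D = card {M. good E U D M}"

lemma good_mem: "good E U D M \<Longrightarrow> x \<in> M \<Longrightarrow> x \<in> E" by (auto simp: good_def)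

lemma good_finite: "finite E \<Longrightarrow> finite {M. good E U D M}"
  by (rule finite_subset[of _ "Pow E"]) (auto dest: good_sub)

lemma good_aux: "(\<forall>e\<in>M. e \<inter> insert c U = {}) \<longleftrightarrow> (\<forall>e\<in>M. e \<inter> U = {}) \<and> c \<notin> \<Union>M"
  by auto
lemma good_insert_iff: "good E (insert c U) D M \<longleftrightarrow> good E U D M \<and> c \<notin> \<Union>M"
  unfolding good_def good_aux by (simp add: conj_ac)

lemma card_covered:
  assumes "finite E"
  shows "int (card {M. good E U D M \<and> c \<in> \<Union>M}) = int (cnt E U D) - int (cnt E (insert c U) D)"
proof -
  have eq: "{M. good E U D M} = {M. good E U D M \<and> c \<in> \<Union>M} \<union> {M. good E (insert c U) D M}"
    by (auto simp: good_insert_iff)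
  have "card {M. good E U D M} = card {M. good E U D M \<and> c \<in> \<Union>M} + card {M. good E (insert c U) D M}"
    unfolding eq
    by (rule card_Un_disjoint) (auto simp: good_insert_iff intro: finite_subset[OF _ good_finite[OF assms]])
  thus ?thesis unfolding cnt_def by simp
qed

lemma cnt_union:
  assumes fin: "finite G" "finite H" and disj: "G \<inter> H = {}" and V: "\<Union>G \<inter> \<Union>H \<subseteq> {c}"
    and UD: "(U \<union> D) \<inter> \<Union>G = {}"
  shows "int (cnt (G \<union> H) U D) =
     (int (cnt G {} {}) - int (cnt G {c} {})) * int (cnt H (insert c U) (insert c D))
   + int (cnt G {c} {c}) * (int (cnt H U D) - int (cnt H (insert c U) D))
   + int (cnt G {c} {}) * int (cnt H (insert c U) D)"
proof -
  define X1 where "X1 = {A. good G {} {} A \<and> c \<in> \<Union>A}"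
  define Y1 where "Y1 = {B. good H (insert c U) (insert c D) B}"
  define X2 where "X2 = {A. good G {c} {c} A}"
  define Y2 where "Y2 = {B. good H U D B \<and> c \<in> \<Union>B}"
  define X3 where "X3 = {A. good G {c} {} A}"
  define Y3 where "Y3 = {B. good H (insert c U) D B}"
  define P where "P = X1 \<times> Y1 \<union> X2 \<times> Y2 \<union> X3 \<times> Y3"
  have PG: "fst p \<subseteq> G" "snd p \<subseteq> H" if "p \<in> P" for p
    using that unfolding P_def X1_def X2_def X3_def Y1_def Y2_def Y3_def by (auto dest: good_mem)
  have finX: "finite X1" "finite X2" "finite X3" unfolding X1_def X2_def X3_def
    using good_finite[OF fin(1)] by (auto intro: finite_subset)
  have finY: "finite Y1" "finite Y2" "finite Y3" unfolding Y1_def Y2_def Y3_def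
    using good_finite[OF fin(2)] by (auto intro: finite_subset)
  have S: "{M. good (G \<union> H) U D M} = (\<lambda>(A, B). A \<union> B) ` P"
  proof
    show "{M. good (G \<union> H) U D M} \<subseteq> (\<lambda>(A, B). A \<union> B) ` P"
    proof
      fix M assume "M \<in> {M. good (G \<union> H) U D M}"
      hence g: "good (G \<union> H) U D M" by simp
      have M: "(M \<inter> G) \<union> (M \<inter> H) = M" using good_sub[OF g] by blast
      have "good (G \<union> H) U D ((M \<inter> G) \<union> (M \<inter> H))" using g by (simp only: M)
      from good_union_fwd[OF _ _ disj V UD this] have "(M \<inter> G, M \<inter> H) \<in> P"
        unfolding P_def X1_def X2_def X3_def Y1_def Y2_def Y3_def by blast
      hence "(\<lambda>(A, B). A \<union> B) (M \<inter> G, M \<inter> H) \<in> (\<lambda>(A, B). A \<union> B) ` P" by (rule imageI)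
      thus "M \<in> (\<lambda>(A, B). A \<union> B) ` P" by (simp only: M prod.case)
    qed
  next
    show "(\<lambda>(A, B). A \<union> B) ` P \<subseteq> {M. good (G \<union> H) U D M}"
    proof
      fix M assume "M \<in> (\<lambda>(A, B). A \<union> B) ` P"
      then obtain A B where AB: "(A, B) \<in> P" "M = A \<union> B" by auto
      have sub: "A \<subseteq> G" "B \<subseteq> H" using PG[OF AB(1)] by auto
      have "(good G {} {} A \<and> c \<in> \<Union>A \<and> good H (insert c U) (insert c D) B) \<or>
     (good G {c} {c} A \<and> good H U D B \<and> c \<in> \<Union>B) \<or>
     (good G {c} {} A \<and> good H (insert c U) D B)" using AB(1)
        unfolding P_def X1_def X2_def X3_def Y1_def Y2_def Y3_def by auto
      from good_union_bwd[OF sub V UD this] show "M \<in> {M. good (G \<union> H) U D M}" using AB by simp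
    qed
  qed
  have inj: "inj_on (\<lambda>(A, B). A \<union> B) P"
  proof (rule inj_onI)
    fix p q assume pq: "p \<in> P" "q \<in> P" "(\<lambda>(A, B). A \<union> B) p = (\<lambda>(A, B). A \<union> B) q"
    obtain A B where p: "p = (A, B)" by (cases p)
    obtain A' B' where q: "q = (A', B')" by (cases q)
    have s: "A \<subseteq> G" "B \<subseteq> H" "A' \<subseteq> G" "B' \<subseteq> H" using PG[OF pq(1)] PG[OF pq(2)] p q by auto
    have u: "A \<union> B = A' \<union> B'" using pq(3) p q by simp
    have "A = (A \<union> B) \<inter> G" "A' = (A' \<union> B') \<inter> G" using s disj by blast+
    hence "A = A'" using u by simp
    moreover have "B = (A \<union> B) \<inter> H" "B' = (A' \<union> B') \<inter> H" using s disj by blast+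
    hence "B = B'" using u by simp
    ultimately show "p = q" using p q by simp
  qed
  have d12: "X1 \<times> Y1 \<inter> X2 \<times> Y2 = {}" unfolding X1_def X2_def by (auto simp: good_insert_iff[of _ c "{}", simplified])
  have d3: "(X1 \<times> Y1 \<union> X2 \<times> Y2) \<inter> X3 \<times> Y3 = {}"
    unfolding X1_def Y2_def X3_def Y3_def by (auto simp: good_insert_iff[of _ c "{}", simplified] good_insert_iff[of _ c U])
  have "card P = card (X1 \<times> Y1) + card (X2 \<times> Y2) + card (X3 \<times> Y3)"
    unfolding P_def
    using finX finY d12 d3 by (simp add: card_Un_disjoint)
  hence cP: "card P = card X1 * card Y1 + card X2 * card Y2 + card X3 * card Y3"
    by (simp add: card_cartesian_product)
  have "cnt (G \<union> H) U D = card P" unfolding cnt_def S using card_image[OF inj] .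
  hence "int (cnt (G \<union> H) U D) = int (card X1) * int (card Y1) + int (card X2) * int (card Y2) + int (card X3) * int (card Y3)"
    using cP by simp
  moreover have "int (card X1) = int (cnt G {} {}) - int (cnt G {c} {})"
    unfolding X1_def using card_covered[OF fin(1), of "{}" "{}" c] by simp
  moreover have "int (card Y2) = int (cnt H U D) - int (cnt H (insert c U) D)"
    unfolding Y2_def using card_covered[OF fin(2), of U D c] by simp
  ultimately show ?thesis unfolding Y1_def X2_def X3_def Y3_def cnt_def by (simp add: algebra_simps)
qed
lemma img_int_empty: "inj_on f V \<Longrightarrow> e \<subseteq> V \<Longrightarrow> e' \<subseteq> V \<Longrightarrow> f ` e \<inter> f ` e' = {} \<longleftrightarrow> e \<inter> e' = {}"
  using inj_on_image_Int[of f V e e'] by (metis image_is_empty)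

lemma good_relabel:
  assumes inj: "inj_on f V" and EV: "\<Union>E \<subseteq> V" and UV: "U \<subseteq> V" and DV: "D \<subseteq> V" and ME: "M \<subseteq> E"
  shows "good ((`) f ` E) (f ` U) (f ` D) ((`) f ` M) \<longleftrightarrow> good E U D M"
proof -
  have sub: "e \<subseteq> V" if "e \<in> E" for e using EV that by blast
  have injg: "inj_on ((`) f) E" using inj_on_image_Pow[OF inj] sub by (auto intro: inj_on_subset)
  have eqi: "f ` e = f ` e' \<longleftrightarrow> e = e'" if "e \<in> E" "e' \<in> E" for e e'
    using inj_on_image_eq_iff[OF inj sub[OF that(1)] sub[OF that(2)]] .
  have inti: "f ` e \<inter> f ` e' = {} \<longleftrightarrow> e \<inter> e' = {}" if "e \<in> E" "e' \<in> E" for e e'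
    using img_int_empty[OF inj sub[OF that(1)] sub[OF that(2)]] .
  have intU: "f ` e \<inter> f ` U = {} \<longleftrightarrow> e \<inter> U = {}" if "e \<in> E" for e
    using img_int_empty[OF inj sub[OF that] UV] .
  have intD: "f ` e \<inter> f ` D = {} \<longleftrightarrow> e \<inter> D = {}" if "e \<in> E" for e
    using img_int_empty[OF inj sub[OF that] DV] .
  have c1: "(`) f ` M \<subseteq> (`) f ` E" using ME by blast
  have c2: "(\<forall>e\<in>(`) f ` M. \<forall>e'\<in>(`) f ` M. e \<noteq> e' \<longrightarrow> e \<inter> e' = {}) \<longleftrightarrow>
            (\<forall>e\<in>M. \<forall>e'\<in>M. e \<noteq> e' \<longrightarrow> e \<inter> e' = {})"
    using ME eqi inti by (auto simp: subset_iff) 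
  have c3: "(\<forall>e\<in>(`) f ` M. e \<inter> f ` U = {}) \<longleftrightarrow> (\<forall>e\<in>M. e \<inter> U = {})"
    using ME intU by (auto simp: subset_iff)
  have c4: "(\<forall>e\<in>(`) f ` E. e \<inter> f ` D = {} \<longrightarrow> (\<exists>e'\<in>(`) f ` M. e \<inter> e' \<noteq> {})) \<longleftrightarrow>
            (\<forall>e\<in>E. e \<inter> D = {} \<longrightarrow> (\<exists>e'\<in>M. e \<inter> e' \<noteq> {}))"
    using ME intD inti by (auto simp: subset_iff)
  show ?thesis unfolding good_def using c1 c2 c3 c4 ME by simp
qed

lemma cnt_relabel:
  assumes inj: "inj_on f V" and EV: "\<Union>E \<subseteq> V" and UV: "U \<subseteq> V" and DV: "D \<subseteq> V"
  shows "cnt ((`) f ` E) (f ` U) (f ` D) = cnt E U D"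
proof -
  have sub: "e \<subseteq> V" if "e \<in> E" for e using EV that by blast
  have injg: "inj_on ((`) f) E" using inj_on_image_Pow[OF inj] sub by (auto intro: inj_on_subset)
  have injgg: "inj_on ((`) ((`) f)) {M. good E U D M}"
    using inj_on_image_Pow[OF injg] by (rule inj_on_subset) (auto dest: good_sub)
  have "{M'. good ((`) f ` E) (f ` U) (f ` D) M'} = (`) ((`) f) ` {M. good E U D M}"
  proof
    show "{M'. good ((`) f ` E) (f ` U) (f ` D) M'} \<subseteq> (`) ((`) f) ` {M. good E U D M}"
    proof
      fix M' assume "M' \<in> {M'. good ((`) f ` E) (f ` U) (f ` D) M'}"
      hence g: "good ((`) f ` E) (f ` U) (f ` D) M'" by simp
      define M where "M = {e \<in> E. f ` e \<in> M'}"
      have M'eq: "M' = (`) f ` M" using good_sub[OF g] unfolding M_def by blast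
      have ME: "M \<subseteq> E" unfolding M_def by blast
      have "good ((`) f ` E) (f ` U) (f ` D) ((`) f ` M)" using g M'eq by simp
      hence "good E U D M" using good_relabel[OF inj EV UV DV ME] by simp
      thus "M' \<in> (`) ((`) f) ` {M. good E U D M}" using M'eq by blast
    qed
  next
    show "(`) ((`) f) ` {M. good E U D M} \<subseteq> {M'. good ((`) f ` E) (f ` U) (f ` D) M'}"
    proof
      fix M' assume "M' \<in> (`) ((`) f) ` {M. good E U D M}"
      then obtain M where M: "good E U D M" "M' = (`) f ` M" by blast
      show "M' \<in> {M'. good ((`) f ` E) (f ` U) (f ` D) M'}"
        using good_relabel[OF inj EV UV DV good_sub[OF M(1)]] M by simp
    qed
  qed
  thus ?thesis unfolding cnt_def using card_image[OF injgg] by simp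
qed

definition cyc :: "nat set set" where "cyc = set [{0,1},{1,2},{2,3},{3,4},{4,5},{5,0}]"
definition hexmap :: "nat \<Rightarrow> nat \<Rightarrow> nat \<Rightarrow> nat" where
  "hexmap d n i = (if i = 0 then hex_entry d n else 5 * n + i)"
lemma hex_edges_map: "hex_edges d n = (`) (hexmap d n) ` cyc"
  by (simp add: hex_edges_def cyc_def hexmap_def, simp add: insert_commute)
lemma hexmap_inj: "d \<le> 3 \<Longrightarrow> inj_on (hexmap d n) {0..5}"
  unfolding inj_on_def hexmap_def hex_entry_def by auto
lemma cyc_V: "\<Union>cyc \<subseteq> {0..5}" by (auto simp: cyc_def)
lemma hex_cnt: "d \<le> 3 \<Longrightarrow> U \<subseteq> {0..5} \<Longrightarrow> D \<subseteq> {0..5} \<Longrightarrow>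
  cnt (hex_edges d n) (hexmap d n ` U) (hexmap d n ` D) = cnt cyc U D"
  unfolding hex_edges_map by (rule cnt_relabel[OF hexmap_inj cyc_V])
fun pwd :: "'a set list \<Rightarrow> bool" where
  "pwd [] = True"
| "pwd (x # xs) = ((\<forall>y\<in>set xs. x \<inter> y = {}) \<and> pwd xs)"

definition goodS :: "'a set list \<Rightarrow> 'a set \<Rightarrow> 'a set \<Rightarrow> 'a set list \<Rightarrow> bool" where
  "goodS es U D ms \<longleftrightarrow> pwd ms \<and> (\<forall>e\<in>set ms. e \<inter> U = {}) \<and> (\<forall>e\<in>set es. e \<inter> D = {} \<longrightarrow> (\<exists>f\<in>set ms. e \<inter> f \<noteq> {}))"

lemma pwd_iff: "distinct ms \<Longrightarrow> pwd ms \<longleftrightarrow> (\<forall>e\<in>set ms. \<forall>f\<in>set ms. e \<noteq> f \<longrightarrow> e \<inter> f = {})"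
proof (induction ms)
  case Nil thus ?case by simp
next
  case (Cons x xs)
  have xn: "x \<notin> set xs" and d: "distinct xs" using Cons.prems by auto
  have "(\<forall>e\<in>set (x # xs). \<forall>f\<in>set (x # xs). e \<noteq> f \<longrightarrow> e \<inter> f = {}) \<longleftrightarrow>
        (\<forall>y\<in>set xs. x \<inter> y = {}) \<and> (\<forall>e\<in>set xs. \<forall>f\<in>set xs. e \<noteq> f \<longrightarrow> e \<inter> f = {})"
  proof
    assume h: "\<forall>e\<in>set (x # xs). \<forall>f\<in>set (x # xs). e \<noteq> f \<longrightarrow> e \<inter> f = {}"
    show "(\<forall>y\<in>set xs. x \<inter> y = {}) \<and> (\<forall>e\<in>set xs. \<forall>f\<in>set xs. e \<noteq> f \<longrightarrow> e \<inter> f = {})"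
    proof (intro conjI ballI impI)
      fix y assume "y \<in> set xs" thus "x \<inter> y = {}" using h xn by force
    next
      fix e f assume "e \<in> set xs" "f \<in> set xs" "e \<noteq> f" thus "e \<inter> f = {}" using h by simp
    qed
  next
    assume h: "(\<forall>y\<in>set xs. x \<inter> y = {}) \<and> (\<forall>e\<in>set xs. \<forall>f\<in>set xs. e \<noteq> f \<longrightarrow> e \<inter> f = {})"
    show "\<forall>e\<in>set (x # xs). \<forall>f\<in>set (x # xs). e \<noteq> f \<longrightarrow> e \<inter> f = {}"
    proof (intro ballI impI)
      fix e f assume ef: "e \<in> set (x # xs)" "f \<in> set (x # xs)" "e \<noteq> f"
      show "e \<inter> f = {}"
      proof (cases "e = x")
        case True thus ?thesis using ef h by auto
      next
        case False
        hence e: "e \<in> set xs" using ef by simp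
        show ?thesis
        proof (cases "f = x")
          case True thus ?thesis using e h by (auto simp: Int_commute)
        next
          case False thus ?thesis using e ef h by simp
        qed
      qed
    qed
  qed
  thus ?case using Cons.IH[OF d] by simp
qed

lemma good_goodS: "distinct ms \<Longrightarrow> set ms \<subseteq> set es \<Longrightarrow> good (set es) U D (set ms) \<longleftrightarrow> goodS es U D ms"
  unfolding good_def goodS_def by (simp add: pwd_iff)

lemma cnt_goodS:
  assumes des: "distinct es"
  shows "cnt (set es) U D = length (filter (goodS es U D) (subseqs es))"
proof -
  define L where "L = subseqs es"
  have dm: "distinct (map set L)" unfolding L_def using distinct_set_subseqs[OF des] .
  hence dL: "distinct L" and inj: "inj_on set (set L)" by (simp_all add: distinct_map)
  have sub: "distinct ms" "set ms \<subseteq> set es" if "ms \<in> set L" for ms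
  proof -
    show "distinct ms" using subseqs_distinctD[OF _ des] that unfolding L_def by blast
    have "set ms \<in> set ` set (subseqs es)" using that unfolding L_def by blast
    thus "set ms \<subseteq> set es" unfolding subseqs_powset by blast
  qed
  have eq: "{M. good (set es) U D M} = set ` set (filter (goodS es U D) L)"
  proof
    show "{M. good (set es) U D M} \<subseteq> set ` set (filter (goodS es U D) L)"
    proof
      fix M assume "M \<in> {M. good (set es) U D M}"
      hence g: "good (set es) U D M" by simp
      have "M \<in> set ` set L" using subset_subseqs[OF good_sub[OF g]] unfolding L_def .
      then obtain ms where ms: "ms \<in> set L" "M = set ms" by blast
      have "goodS es U D ms" using g good_goodS[OF sub[OF ms(1)]] ms(2) by simp
      thus "M \<in> set ` set (filter (goodS es U D) L)" using ms by auto
    qed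
  next
    show "set ` set (filter (goodS es U D) L) \<subseteq> {M. good (set es) U D M}"
    proof
      fix M assume "M \<in> set ` set (filter (goodS es U D) L)"
      then obtain ms where ms: "ms \<in> set L" "goodS es U D ms" "M = set ms" by auto
      thus "M \<in> {M. good (set es) U D M}" using good_goodS[OF sub[OF ms(1)]] by simp
    qed
  qed
  have "card (set ` set (filter (goodS es U D) L)) = card (set (filter (goodS es U D) L))"
    by (rule card_image) (rule inj_on_subset[OF inj], auto)
  also have "\<dots> = length (filter (goodS es U D) L)"
    by (rule distinct_card) (simp add: dL)
  finally show ?thesis unfolding cnt_def eq L_def .
qed

lemma cnt_cyc: "cnt cyc U D = length (filter (goodS [{0,1},{1,2},{2,3},{3,4},{4,5},{5,0}] U D) (subseqs [{0,1},{1,2},{2,3},{3,4},{4,5},{5,0::nat}]))"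
  unfolding cyc_def by (rule cnt_goodS) (simp add: doubleton_eq_iff)

lemma cyc_vals:
  "cnt cyc {0} {0} = 3" "cnt cyc {} {} = 5" "cnt cyc {0} {} = 1"
  "cnt cyc {0,3} {0} = 1" "cnt cyc {3} {} = 1" "cnt cyc {0,3} {} = 1"
  "cnt cyc {0,3} {0,3} = 1" "cnt cyc {3} {3} = 3" "cnt cyc {0,3} {3} = 1"
  "cnt cyc {0,2} {0} = 0" "cnt cyc {2} {} = 1" "cnt cyc {0,2} {} = 0"
  "cnt cyc {0,2} {0,2} = 2" "cnt cyc {2} {2} = 3" "cnt cyc {0,2} {2} = 0"
  "cnt cyc {0,1} {0} = 1" "cnt cyc {1} {} = 1" "cnt cyc {0,1} {} = 0"
  "cnt cyc {0,1} {0,1} = 2" "cnt cyc {1} {1} = 3" "cnt cyc {0,1} {1} = 1"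
  unfolding cnt_cyc by (simp_all add: goodS_def ex_disj_distrib)

lemma maximal_iff_good:
  assumes ne: "\<forall>e\<in>E. e \<noteq> {}"
  shows "maximal_matching E M \<longleftrightarrow> good E {} {} M"
proof
  assume mm: "maximal_matching E M"
  hence m: "matching E M" and mx: "\<And>M'. matching E M' \<Longrightarrow> M \<subseteq> M' \<Longrightarrow> M' = M"
    by (auto simp: maximal_matching_def)
  have sub: "M \<subseteq> E" and pw: "\<And>e f. e \<in> M \<Longrightarrow> f \<in> M \<Longrightarrow> e \<noteq> f \<Longrightarrow> e \<inter> f = {}"
    using m unfolding matching_def by auto
  have dom: "\<exists>f\<in>M. e \<inter> f \<noteq> {}" if eE: "e \<in> E" for e
  proof (rule ccontr)
    assume "\<not> ?thesis"
    hence dis: "\<And>f. f \<in> M \<Longrightarrow> e \<inter> f = {}" by blast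
    have "e \<notin> M" using dis[of e] ne eE by auto
    have "matching E (insert e M)" unfolding matching_def
    proof (intro conjI ballI impI)
      show "insert e M \<subseteq> E" using sub eE by blast
    next
      fix x y assume xy: "x \<in> insert e M" "y \<in> insert e M" "x \<noteq> y"
      show "x \<inter> y = {}"
      proof (cases "x = e")
        case True
        hence "y \<in> M" using xy by blast
        thus ?thesis using dis True by blast
      next
        case False
        hence xM: "x \<in> M" using xy by blast
        show ?thesis
        proof (cases "y = e")
          case True thus ?thesis using dis[OF xM] by (simp add: Int_commute)
        next
          case False thus ?thesis using xM xy pw by blast
        qed
      qed
    qed
    from mx[OF this] have "insert e M = M" by blast
    with \<open>e \<notin> M\<close> show False by blast
  qed
  show "good E {} {} M" by (rule goodI) (use sub pw dom in auto)
next
  assume g: "good E {} {} M"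
  have sub: "M \<subseteq> E" using good_sub[OF g] .
  have m: "matching E M" unfolding matching_def using sub good_pw[OF g] by blast
  have "M' = M" if m': "matching E M'" and sub': "M \<subseteq> M'" for M'
  proof (rule ccontr)
    assume "M' \<noteq> M"
    then obtain e where e: "e \<in> M'" "e \<notin> M" using sub' by blast
    hence "e \<in> E" using m' unfolding matching_def by blast
    then obtain f where f: "f \<in> M" "e \<inter> f \<noteq> {}" using good_dom[OF g] by blast
    have "f \<in> M'" using f sub' by blast
    moreover have "e \<noteq> f" using e f by blast
    ultimately show False using m' e f unfolding matching_def by blast
  qed
  thus "maximal_matching E M" using m by (auto simp: maximal_matching_def)
qed

lemma Psi_cnt: "\<forall>e\<in>E. e \<noteq> {} \<Longrightarrow> Psi E = cnt E {} {}"
  unfolding Psi_def cnt_def using maximal_iff_good by metis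

lemma chain_Suc: "chain_edges d (Suc n) = chain_edges d n \<union> hex_edges d n"
  unfolding chain_edges_def by (simp add: lessThan_Suc Un_commute)

lemma hex_finite: "finite (hex_edges d n)" by (simp add: hex_edges_def)
lemma chain_finite: "finite (chain_edges d n)" unfolding chain_edges_def by (simp add: hex_finite)

lemma hex_entry_le: "d \<le> 3 \<Longrightarrow> hex_entry d k \<le> 5 * k"
  by (cases k) (auto simp: hex_entry_def)

lemma hex_vert: "x \<in> \<Union>(hex_edges d k) \<Longrightarrow> x = hex_entry d k \<or> (5 * k + 1 \<le> x \<and> x \<le> 5 * k + 5)"
  by (auto simp: hex_edges_def)

lemma chain_vert: assumes "d \<le> 3" "x \<in> \<Union>(chain_edges d n)" shows "x \<le> 5 * n"
proof -
  obtain k where k: "k < n" "x \<in> \<Union>(hex_edges d k)" using assms(2) unfolding chain_edges_def by blast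
  from hex_vert[OF k(2)] hex_entry_le[OF assms(1), of k] k(1) show ?thesis by auto
qed

lemma hex_big: "e \<in> hex_edges d n \<Longrightarrow> \<exists>y\<in>e. 5 * n < y"
  by (auto simp: hex_edges_def)

lemma hex_nonempty: "e \<in> hex_edges d n \<Longrightarrow> e \<noteq> {}"
  by (auto simp: hex_edges_def)

lemma chain_nonempty: "\<forall>e\<in>chain_edges d n. e \<noteq> {}"
  unfolding chain_edges_def using hex_nonempty by blast

lemma cnt_empty: "cnt {} U D = 1"
proof -
  have "{M. good {} U D M} = {{}}" by (auto simp: good_def)
  thus ?thesis by (simp add: cnt_def)
qed

definition stA :: "nat \<Rightarrow> nat \<Rightarrow> int" where "stA d n = int (cnt (chain_edges d n) {} {})"
definition stB :: "nat \<Rightarrow> nat \<Rightarrow> int" where "stB d n = int (cnt (chain_edges d n) {hex_entry d n} {})"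
definition stZ :: "nat \<Rightarrow> nat \<Rightarrow> int" where "stZ d n = int (cnt (chain_edges d n) {hex_entry d n} {hex_entry d n})"
definition hc :: "nat set \<Rightarrow> nat set \<Rightarrow> int" where "hc U D = int (cnt cyc U D)"

lemma st0: "stA d 0 = 1" "stB d 0 = 1" "stZ d 0 = 1"
  by (simp_all add: stA_def stB_def stZ_def chain_edges_def cnt_empty)

lemma psi_stA: "real (psi_seq d n) = real_of_int (stA d n)"
proof (cases "n = 0")
  case True thus ?thesis by (simp add: psi_seq_def st0)
next
  case False thus ?thesis by (simp add: psi_seq_def stA_def Psi_cnt[OF chain_nonempty])
qed

lemma st_rec:
  assumes d: "1 \<le> d" "d \<le> 3"
  shows "stA d (Suc n) = (stA d n - stB d n) * hc {0} {0} + stZ d n * (hc {} {} - hc {0} {}) + stB d n * hc {0} {}"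
    "stB d (Suc n) = (stA d n - stB d n) * hc {0,d} {0} + stZ d n * (hc {d} {} - hc {0,d} {}) + stB d n * hc {0,d} {}"
    "stZ d (Suc n) = (stA d n - stB d n) * hc {0,d} {0,d} + stZ d n * (hc {d} {d} - hc {0,d} {d}) + stB d n * hc {0,d} {d}"
proof -
  define G where "G = chain_edges d n"
  define H where "H = hex_edges d n"
  define c where "c = hex_entry d n"
  define c' where "c' = hex_entry d (Suc n)"
  have c'eq: "c' = 5 * n + d" unfolding c'_def hex_entry_def by simp
  have finG: "finite G" and finH: "finite H" unfolding G_def H_def by (simp_all add: chain_finite hex_finite)
  have vG: "x \<le> 5 * n" if "x \<in> \<Union>G" for x using chain_vert[OF d(2)] that unfolding G_def by blast
  have disj: "G \<inter> H = {}"
  proof (rule ccontr)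
    assume "G \<inter> H \<noteq> {}"
    then obtain e where e: "e \<in> G" "e \<in> H" by blast
    then obtain y where "y \<in> e" "5 * n < y" using hex_big unfolding H_def by blast
    moreover have "y \<le> 5 * n" using vG \<open>y \<in> e\<close> e(1) by blast
    ultimately show False by simp
  qed
  have V: "\<Union>G \<inter> \<Union>H \<subseteq> {c}"
  proof
    fix x assume x: "x \<in> \<Union>G \<inter> \<Union>H"
    have "x \<le> 5 * n" using vG x by blast
    moreover have "x = c \<or> (5 * n + 1 \<le> x \<and> x \<le> 5 * n + 5)" using hex_vert x unfolding H_def c_def by blast
    ultimately show "x \<in> {c}" by auto
  qed
  have c'G: "c' \<notin> \<Union>G" using vG c'eq d by fastforce
  have UD1: "({} \<union> {}) \<inter> \<Union>G = {}" by simp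
  have UD2: "({c'} \<union> {}) \<inter> \<Union>G = {}" using c'G by blast
  have UD3: "({c'} \<union> {c'}) \<inter> \<Union>G = {}" using c'G by blast
  have im0: "hexmap d n ` {0} = {c}" by (simp add: hexmap_def c_def)
  have imd: "hexmap d n ` {d} = {c'}" using d by (simp add: hexmap_def c'eq)
  have im0d: "hexmap d n ` {0,d} = {c,c'}" using d by (simp add: hexmap_def c'eq c_def insert_commute)
  have ime: "hexmap d n ` {} = {}" by simp
  have hx: "int (cnt H (hexmap d n ` U0) (hexmap d n ` D0)) = hc U0 D0"
    if "U0 \<subseteq> {0..5}" "D0 \<subseteq> {0..5}" for U0 D0
    unfolding H_def hc_def using hex_cnt[OF d(2) that] by simp
  have s0: "{0} \<subseteq> {0..(5::nat)}" "{d} \<subseteq> {0..5}" "{0,d} \<subseteq> {0..5}" "{} \<subseteq> {0..(5::nat)}" using d by auto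
  have h1: "int (cnt H {c} {c}) = hc {0} {0}" using hx[OF s0(1) s0(1)] unfolding im0 .
  have h2: "int (cnt H {} {}) = hc {} {}" using hx[OF s0(4) s0(4)] unfolding ime .
  have h3: "int (cnt H {c} {}) = hc {0} {}" using hx[OF s0(1) s0(4)] unfolding im0 ime .
  have h4: "int (cnt H {c,c'} {c}) = hc {0,d} {0}" using hx[OF s0(3) s0(1)] unfolding im0d im0 .
  have h5: "int (cnt H {c'} {}) = hc {d} {}" using hx[OF s0(2) s0(4)] unfolding imd ime .
  have h6: "int (cnt H {c,c'} {}) = hc {0,d} {}" using hx[OF s0(3) s0(4)] unfolding im0d ime .
  have h7: "int (cnt H {c,c'} {c,c'}) = hc {0,d} {0,d}" using hx[OF s0(3) s0(3)] unfolding im0d .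
  have h8: "int (cnt H {c'} {c'}) = hc {d} {d}" using hx[OF s0(2) s0(2)] unfolding imd .
  have h9: "int (cnt H {c,c'} {c'}) = hc {0,d} {d}" using hx[OF s0(3) s0(2)] unfolding im0d imd .
  have GH: "chain_edges d (Suc n) = G \<union> H" unfolding G_def H_def by (rule chain_Suc)
  have A: "stA d n = int (cnt G {} {})" "stB d n = int (cnt G {c} {})" "stZ d n = int (cnt G {c} {c})"
    unfolding stA_def stB_def stZ_def G_def c_def by simp_all
  show "stA d (Suc n) = (stA d n - stB d n) * hc {0} {0} + stZ d n * (hc {} {} - hc {0} {}) + stB d n * hc {0} {}"
    using cnt_union[OF finG finH disj V UD1] unfolding stA_def[of d "Suc n"] GH A h1 h2 h3 by simp
  show "stB d (Suc n) = (stA d n - stB d n) * hc {0,d} {0} + stZ d n * (hc {d} {} - hc {0,d} {}) + stB d n * hc {0,d} {}"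
    using cnt_union[OF finG finH disj V UD2] unfolding stB_def[of d "Suc n"] GH A h4 h5 h6 c'_def[symmetric] by simp
  show "stZ d (Suc n) = (stA d n - stB d n) * hc {0,d} {0,d} + stZ d n * (hc {d} {d} - hc {0,d} {d}) + stB d n * hc {0,d} {d}"
    using cnt_union[OF finG finH disj V UD3] unfolding stZ_def[of d "Suc n"] GH A h7 h8 h9 c'_def[symmetric] by simp
qed

lemma fps_ratio:
  fixes a :: "nat \<Rightarrow> real" and N D :: "real fps"
  assumes "Abs_fps a * D = N" "fps_nth D 0 \<noteq> 0"
  shows "Abs_fps a = N / D"
proof -
  have "D \<noteq> 0" using assms(2) by auto
  thus ?thesis using assms(1) by (metis nonzero_mult_div_cancel_right)
qed

lemma coeff_lin:
  fixes a :: "nat \<Rightarrow> real"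
  shows "fps_nth (Abs_fps a * (1 - of_int p * fps_X + of_int q * fps_X ^ 2 - of_int r * fps_X ^ 3)) n =
     a n - (if n < 1 then 0 else of_int p * a (n - 1)) + (if n < 2 then 0 else of_int q * a (n - 2))
       - (if n < 3 then 0 else of_int r * a (n - 3))"
proof -
  have e: "Abs_fps a * (1 - of_int p * fps_X + of_int q * fps_X ^ 2 - of_int r * fps_X ^ 3)
     = Abs_fps a - fps_const (of_int p) * (fps_X ^ 1 * Abs_fps a) + fps_const (of_int q) * (fps_X ^ 2 * Abs_fps a)
       - fps_const (of_int r) * (fps_X ^ 3 * Abs_fps a)"
    by (simp add: algebra_simps fps_of_int)
  show ?thesis unfolding e by (simp only: fps_sub_nth fps_add_nth fps_mult_left_const_nth fps_X_power_mult_nth) simp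
qed

lemma rec3:
  "stA 3 (Suc n) = 3 * stA 3 n - 2 * stB 3 n + 4 * stZ 3 n"
  "stB 3 (Suc n) = stA 3 n"
  "stZ 3 (Suc n) = stA 3 n + 2 * stZ 3 n"
  using st_rec[of 3 n] unfolding hc_def cyc_vals by (simp_all add: algebra_simps)

lemma rec2:
  "stA 2 (Suc n) = 3 * stA 2 n - 2 * stB 2 n + 4 * stZ 2 n"
  "stB 2 (Suc n) = stZ 2 n"
  "stZ 2 (Suc n) = 2 * stA 2 n - 2 * stB 2 n + 3 * stZ 2 n"
  using st_rec[of 2 n] unfolding hc_def cyc_vals by (simp_all add: algebra_simps)

lemma rec1:
  "stA 1 (Suc n) = 3 * stA 1 n - 2 * stB 1 n + 4 * stZ 1 n"
  "stB 1 (Suc n) = stA 1 n - stB 1 n + stZ 1 n"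
  "stZ 1 (Suc n) = 2 * stA 1 n - stB 1 n + 2 * stZ 1 n"
  using st_rec[of 1 n] unfolding hc_def cyc_vals by (simp_all add: algebra_simps)


lemma three3: "stA 3 (Suc (Suc (Suc n))) = 5 * stA 3 (Suc (Suc n)) - 4 * stA 3 (Suc n) + 4 * stA 3 n"
  unfolding rec3 by (simp add: algebra_simps)
lemma init3: "stA 3 0 = 1" "stA 3 (Suc 0) = 5" "stA 3 (Suc (Suc 0)) = 25"
  unfolding rec3 st0 by simp_all

lemma part3: "Abs_fps (\<lambda>n. real (psi_seq 3 n)) =
           (1 + 4 * fps_X ^ 2) / (1 - 5 * fps_X + 4 * fps_X ^ 2 - 4 * fps_X ^ 3)"
proof -
  define a where "a = (\<lambda>n. real_of_int (stA 3 n))"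
  have ps: "(\<lambda>n. real (psi_seq 3 n)) = a" unfolding a_def using psi_stA by auto
  have r: "a (Suc (Suc (Suc n))) = 5 * a (Suc (Suc n)) - 4 * a (Suc n) + 4 * a n" for n
    unfolding a_def three3 by simp
  have i: "a 0 = 1" "a (Suc 0) = 5" "a (Suc (Suc 0)) = 25" unfolding a_def init3 by simp_all
  have "Abs_fps a * (1 - 5 * fps_X + 4 * fps_X ^ 2 - 4 * fps_X ^ 3) = (1 + 4 * fps_X ^ 2 :: real fps)"
  proof (rule fps_ext)
    fix n
    have c: "fps_nth (Abs_fps a * (1 - 5 * fps_X + 4 * fps_X ^ 2 - 4 * fps_X ^ 3)) n =
     a n - (if n < 1 then 0 else 5 * a (n - 1)) + (if n < 2 then 0 else 4 * a (n - 2))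
       - (if n < 3 then 0 else 4 * a (n - 3))"
      using coeff_lin[of a 5 4 4 n] by simp
    have rhs: "fps_nth (1 + 4 * fps_X ^ 2 :: real fps) n = (if n = 2 then 4 else if n = 0 then 1 else 0)"
      by (simp add: fps_numeral_fps_const fps_X_power_nth)
    show "fps_nth (Abs_fps a * (1 - 5 * fps_X + 4 * fps_X ^ 2 - 4 * fps_X ^ 3)) n = fps_nth (1 + 4 * fps_X ^ 2 :: real fps) n"
    proof (cases n)
      case 0 thus ?thesis unfolding c rhs using i by simp
    next
      case (Suc m) note m = this
      show ?thesis
      proof (cases m)
        case 0 thus ?thesis unfolding c rhs using i m by simp
      next
        case (Suc k) note k = this
        show ?thesis
        proof (cases k)
          case 0 thus ?thesis unfolding c rhs using i m k by (simp add: numeral_2_eq_2)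
        next
          case (Suc j) thus ?thesis unfolding c rhs using m k r[of j] by simp
        qed
      qed
    qed
  qed
  hence "Abs_fps a = (1 + 4 * fps_X ^ 2) / (1 - 5 * fps_X + 4 * fps_X ^ 2 - 4 * fps_X ^ 3)"
    by (rule fps_ratio) simp
  thus ?thesis unfolding ps .
qed
lemma three2: "stA 2 (Suc (Suc (Suc n))) = 6 * stA 2 (Suc (Suc n)) - 3 * stA 2 (Suc n) + 2 * stA 2 n"
  unfolding rec2 by (simp add: algebra_simps)
lemma init2: "stA 2 0 = 1" "stA 2 (Suc 0) = 5" "stA 2 (Suc (Suc 0)) = 25"
  unfolding rec2 st0 by simp_all

lemma part2: "Abs_fps (\<lambda>n. real (psi_seq 2 n)) =
           (1 - fps_X - 2 * fps_X ^ 2) / (1 - 6 * fps_X + 3 * fps_X ^ 2 - 2 * fps_X ^ 3)"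
proof -
  define a where "a = (\<lambda>n. real_of_int (stA 2 n))"
  have ps: "(\<lambda>n. real (psi_seq 2 n)) = a" unfolding a_def using psi_stA by auto
  have r: "a (Suc (Suc (Suc n))) = 6 * a (Suc (Suc n)) - 3 * a (Suc n) + 2 * a n" for n
    unfolding a_def three2 by simp
  have i: "a 0 = 1" "a (Suc 0) = 5" "a (Suc (Suc 0)) = 25" unfolding a_def init2 by simp_all
  have "Abs_fps a * (1 - 6 * fps_X + 3 * fps_X ^ 2 - 2 * fps_X ^ 3) = (1 - fps_X - 2 * fps_X ^ 2 :: real fps)"
  proof (rule fps_ext)
    fix n
    have c: "fps_nth (Abs_fps a * (1 - 6 * fps_X + 3 * fps_X ^ 2 - 2 * fps_X ^ 3)) n =
     a n - (if n < 1 then 0 else 6 * a (n - 1)) + (if n < 2 then 0 else 3 * a (n - 2))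
       - (if n < 3 then 0 else 2 * a (n - 3))"
      using coeff_lin[of a 6 3 2 n] by simp
    have rhs: "fps_nth (1 - fps_X - 2 * fps_X ^ 2 :: real fps) n = (if n = 0 then 1 else if n = 1 then -1 else if n = 2 then -2 else 0)"
      by (simp add: fps_numeral_fps_const fps_X_power_nth)
    show "fps_nth (Abs_fps a * (1 - 6 * fps_X + 3 * fps_X ^ 2 - 2 * fps_X ^ 3)) n = fps_nth (1 - fps_X - 2 * fps_X ^ 2 :: real fps) n"
    proof (cases n)
      case 0 thus ?thesis unfolding c rhs using i by simp
    next
      case (Suc m) note m = this
      show ?thesis
      proof (cases m)
        case 0 thus ?thesis unfolding c rhs using i m by simp
      next
        case (Suc k) note k = this
        show ?thesis
        proof (cases k)
          case 0 thus ?thesis unfolding c rhs using i m k by (simp add: numeral_2_eq_2)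
        next
          case (Suc j) thus ?thesis unfolding c rhs using m k r[of j] by simp
        qed
      qed
    qed
  qed
  hence "Abs_fps a = (1 - fps_X - 2 * fps_X ^ 2) / (1 - 6 * fps_X + 3 * fps_X ^ 2 - 2 * fps_X ^ 3)"
    by (rule fps_ratio) simp
  thus ?thesis unfolding ps .
qed
lemma three1: "stA 1 (Suc (Suc (Suc n))) = 4 * stA 1 (Suc (Suc n)) + 4 * stA 1 (Suc n) + stA 1 n"
  unfolding rec1 by (simp add: algebra_simps)
lemma init1: "stA 1 0 = 1" "stA 1 (Suc 0) = 5" "stA 1 (Suc (Suc 0)) = 25"
  unfolding rec1 st0 by simp_all

lemma part1: "Abs_fps (\<lambda>n. real (psi_seq 1 n)) =
           (1 + fps_X + fps_X ^ 2) / (1 - 4 * fps_X - 4 * fps_X ^ 2 - fps_X ^ 3)"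
proof -
  define a where "a = (\<lambda>n. real_of_int (stA 1 n))"
  have ps: "(\<lambda>n. real (psi_seq 1 n)) = a" unfolding a_def using psi_stA by auto
  have r: "a (Suc (Suc (Suc n))) = 4 * a (Suc (Suc n)) + 4 * a (Suc n) + a n" for n
    unfolding a_def three1 by simp
  have i: "a 0 = 1" "a (Suc 0) = 5" "a (Suc (Suc 0)) = 25" unfolding a_def init1 by simp_all
  have "Abs_fps a * (1 - 4 * fps_X - 4 * fps_X ^ 2 - fps_X ^ 3) = (1 + fps_X + fps_X ^ 2 :: real fps)"
  proof (rule fps_ext)
    fix n
    have c: "fps_nth (Abs_fps a * (1 - 4 * fps_X - 4 * fps_X ^ 2 - fps_X ^ 3)) n =
     a n - (if n < 1 then 0 else 4 * a (n - 1)) + (if n < 2 then 0 else (-4) * a (n - 2))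
       - (if n < 3 then 0 else a (n - 3))"
      using coeff_lin[of a 4 "-4" 1 n] by simp
    have rhs: "fps_nth (1 + fps_X + fps_X ^ 2 :: real fps) n = (if n = 0 then 1 else if n = 1 then 1 else if n = 2 then 1 else 0)"
      by (simp add: fps_numeral_fps_const fps_X_power_nth)
    show "fps_nth (Abs_fps a * (1 - 4 * fps_X - 4 * fps_X ^ 2 - fps_X ^ 3)) n = fps_nth (1 + fps_X + fps_X ^ 2 :: real fps) n"
    proof (cases n)
      case 0 thus ?thesis unfolding c rhs using i by simp
    next
      case (Suc m) note m = this
      show ?thesis
      proof (cases m)
        case 0 thus ?thesis unfolding c rhs using i m by simp
      next
        case (Suc k) note k = this
        show ?thesis
        proof (cases k)
          case 0 thus ?thesis unfolding c rhs using i m k by (simp add: numeral_2_eq_2)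
        next
          case (Suc j) thus ?thesis unfolding c rhs using m k r[of j] by simp
        qed
      qed
    qed
  qed
  hence "Abs_fps a = (1 + fps_X + fps_X ^ 2) / (1 - 4 * fps_X - 4 * fps_X ^ 2 - fps_X ^ 3)"
    by (rule fps_ratio) simp
  thus ?thesis unfolding ps .
qed
theorem theorem3p4:
  shows "Abs_fps (\<lambda>n. real (psi_seq 3 n)) =
           (1 + 4 * fps_X ^ 2) / (1 - 5 * fps_X + 4 * fps_X ^ 2 - 4 * fps_X ^ 3) \<and>
         Abs_fps (\<lambda>n. real (psi_seq 2 n)) =
           (1 - fps_X - 2 * fps_X ^ 2) / (1 - 6 * fps_X + 3 * fps_X ^ 2 - 2 * fps_X ^ 3) \<and>
         Abs_fps (\<lambda>n. real (psi_seq 1 n)) =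
           (1 + fps_X + fps_X ^ 2) / (1 - 4 * fps_X - 4 * fps_X ^ 2 - fps_X ^ 3)"
  using part3 part2 part1 by blast

end
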